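(* Let $G$ be a $k$-cozy graph whose edge connectivity $\kappa'(G)$ satisfies $\kappa'(G)<k$. Then $\kappa'(G)$ is even.
   Context: An undirected graph $G$ is $k$-cozy if it is connected, $k$-regular, and equipped with a $1$-factorization, i.e., an assignment of colors from $\{1,\dots,k\}$ to its edges such that the $k$ edges incident at each vertex receive distinct colors. The edge connectivity $\kappa'(G)$ is the minimum number of edges whose removal disconnects $G$. *)

theory Defs
  imports Main
begin

definition graph :: "'a set \<Rightarrow> 'a set set \<Rightarrow> bool" where
  "graph V E \<longleftrightarrow> finite V \<and> (\<forall>e\<in>E. e \<subseteq> V \<and> card e = 2)"

definition adj :: "'a set set \<Rightarrow> ('a \<times> 'a) set" where
  "adj E = {(u, v). {u, v} \<in> E}"

definition connected_graph :: "'a set \<Rightarrow> 'a set set \<Rightarrow> bool" where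
  "connected_graph V E \<longleftrightarrow> V \<noteq> {} \<and> (\<forall>u\<in>V. \<forall>v\<in>V. (u, v) \<in> (adj E)\<^sup>*)"

definition degree :: "'a set set \<Rightarrow> 'a \<Rightarrow> nat" where
  "degree E v = card {e \<in> E. v \<in> e}"

definition regular :: "nat \<Rightarrow> 'a set \<Rightarrow> 'a set set \<Rightarrow> bool" where
  "regular k V E \<longleftrightarrow> (\<forall>v\<in>V. degree E v = k)"

definition one_factorization :: "nat \<Rightarrow> 'a set \<Rightarrow> 'a set set \<Rightarrow> ('a set \<Rightarrow> nat) \<Rightarrow> bool" where
  "one_factorization k V E col \<longleftrightarrow>
     (\<forall>e\<in>E. col e \<in> {1..k}) \<and>
     (\<forall>v\<in>V. inj_on col {e \<in> E. v \<in> e})"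

definition cozy :: "nat \<Rightarrow> 'a set \<Rightarrow> 'a set set \<Rightarrow> ('a set \<Rightarrow> nat) \<Rightarrow> bool" where
  "cozy k V E col \<longleftrightarrow> graph V E \<and> connected_graph V E \<and> regular k V E
     \<and> one_factorization k V E col"

definition edge_connectivity :: "'a set \<Rightarrow> 'a set set \<Rightarrow> nat" where
  "edge_connectivity V E = (LEAST n. \<exists>F \<subseteq> E. card F = n \<and> \<not> connected_graph V (E - F))"

end

theory Submission
  imports Defs
begin

theorem mainTheorem11:
  fixes V :: "'a set" and E :: "'a set set" and col :: "'a set \<Rightarrow> nat" and k :: nat
  assumes "cozy k V E col"
    and "edge_connectivity V E < k"
  shows "even (edge_connectivity V E)"
proof -
  let ?l = "edge_connectivity V E"
  from assms(1) have gV: "finite V" and gE: "\<And>e. e\<in>E \<Longrightarrow> e \<subseteq> V \<and> card e = 2"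
    and conn: "connected_graph V E" and reg: "\<And>v. v\<in>V \<Longrightarrow> degree E v = k"
    and colr: "\<And>e. e\<in>E \<Longrightarrow> col e \<in> {1..k}"
    and inj: "\<And>v. v\<in>V \<Longrightarrow> inj_on col {e\<in>E. v\<in>e}"
    unfolding cozy_def graph_def regular_def one_factorization_def by auto
  have "E \<subseteq> Pow V" using gE by auto
  hence finE: "finite E" using gV by (meson finite_Pow_iff finite_subset)
  have Vne: "V \<noteq> {}" using conn connected_graph_def by auto
  have k1: "k \<ge> 1" using assms(2) by auto
  have uniq: "\<exists>!e. e\<in>E \<and> v\<in>e \<and> col e = c" if v: "v\<in>V" and c: "c\<in>{1..k}" for v c
  proof -
    let ?Ev = "{e\<in>E. v\<in>e}"
    have "card ?Ev = k" using reg[OF v] unfolding degree_def .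
    have sub: "col ` ?Ev \<subseteq> {1..k}" using colr by auto
    have "card (col ` ?Ev) = k" using card_image[OF inj[OF v]] \<open>card ?Ev = k\<close> by simp
    hence "col ` ?Ev = {1..k}" using card_subset_eq[of "{1..k}" "col ` ?Ev"] sub by simp
    hence "c \<in> col ` ?Ev" using c by simp
    then obtain e where e: "e \<in> ?Ev" "col e = c" by blast
    moreover have "\<And>e'. e'\<in>E \<Longrightarrow> v\<in>e' \<Longrightarrow> col e' = c \<Longrightarrow> e' = e"
      using inj[OF v] e unfolding inj_on_def by auto
    ultimately show ?thesis by blast
  qed
  obtain v0 where v0: "v0 \<in> V" using Vne by auto
  obtain e0 where e0: "e0 \<in> E" "v0 \<in> e0" using uniq[OF v0, of 1] k1 by auto
  have "card e0 = 2" using gE[OF e0(1)] by blast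
  then obtain a b where ab: "e0 = {a,b}" "a \<noteq> b" unfolding card_2_iff by blast
  obtain w0 where w0: "w0 \<in> e0" "w0 \<noteq> v0" using ab e0 by auto
  have w0V: "w0 \<in> V" using gE[OF e0(1)] w0 by auto
  have "adj ({}::'a set set) = {}" by (auto simp: adj_def)
  hence "\<not> connected_graph V (E - E)" using v0 w0V w0 unfolding connected_graph_def by auto
  hence "\<exists>n. \<exists>F\<subseteq>E. card F = n \<and> \<not> connected_graph V (E-F)" by blast
  from LeastI_ex[OF this] obtain F where F: "F \<subseteq> E" "card F = ?l" "\<not> connected_graph V (E-F)"
    unfolding edge_connectivity_def by blast
  from F(3) Vne obtain u v where u: "u\<in>V" "v\<in>V" "(u,v) \<notin> (adj (E-F))\<^sup>*"
    unfolding connected_graph_def by blast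
  define S where "S = {w\<in>V. (u,w) \<in> (adj (E-F))\<^sup>*}"
  define C where "C = {e\<in>E. \<exists>x\<in>S. \<exists>y\<in>V-S. e = {x,y}}"
  have CF: "C \<subseteq> F"
  proof
    fix e assume "e\<in>C"
    then obtain x y where xy: "e\<in>E" "x\<in>S" "y\<in>V-S" "e={x,y}" by (auto simp: C_def)
    show "e\<in>F"
    proof (rule ccontr)
      assume "e\<notin>F"
      hence "(x,y) \<in> adj (E-F)" using xy by (auto simp: adj_def)
      hence "(u,y) \<in> (adj (E-F))\<^sup>*" using xy(2) by (auto simp: S_def intro: rtrancl_into_rtrancl)
      thus False using xy(3) by (auto simp: S_def)
    qed
  qed
  have Cdisc: "\<not> connected_graph V (E - C)"
  proof
    assume "connected_graph V (E-C)"
    hence "(u,v) \<in> (adj (E-C))\<^sup>*" using u by (auto simp: connected_graph_def)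
    moreover have "(u,w) \<in> (adj (E-C))\<^sup>* \<Longrightarrow> w \<in> S" for w
    proof (induction rule: rtrancl_induct)
      case base show ?case using u by (simp add: S_def)
    next
      case (step y z)
      hence yz: "{y,z} \<in> E" "{y,z} \<notin> C" by (auto simp: adj_def)
      hence "z \<in> V" using gE by auto
      show ?case
      proof (rule ccontr)
        assume "z \<notin> S"
        hence "{y,z} \<in> C" using step.IH yz \<open>z\<in>V\<close> by (auto simp: C_def)
        thus False using yz by simp
      qed
    qed
    ultimately have "v \<in> S" by blast
    thus False using u by (simp add: S_def)
  qed
  have "?l \<le> card C" unfolding edge_connectivity_def
    by (rule Least_le, rule exI[of _ C]) (use Cdisc in \<open>auto simp: C_def\<close>)
  moreover have "card C \<le> ?l" using card_mono[OF finite_subset[OF F(1) finE] CF] F(2) by simp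
  ultimately have cardC: "card C = ?l" by simp
  have finC: "finite C" using finE by (auto simp: C_def)
  define Cc where "Cc c = {e\<in>C. col e = c}" for c
  have partC: "card C = (\<Sum>c\<in>{1..k}. card (Cc c))"
  proof -
    have "C = (\<Union>c\<in>{1..k}. Cc c)" using colr unfolding Cc_def C_def by blast
    moreover have "card (\<Union>c\<in>{1..k}. Cc c) = (\<Sum>c\<in>{1..k}. card (Cc c))"
      by (rule card_UN_disjoint) (use finC in \<open>auto simp: Cc_def\<close>)
    ultimately show ?thesis by simp
  qed
  have SV: "S \<subseteq> V" by (auto simp: S_def)
  have finS: "finite S" using gV SV finite_subset by auto
  have parity: "card S = 2 * card {e\<in>E. col e = c \<and> e \<subseteq> S} + card (Cc c)" if c: "c \<in> {1..k}" for c
  proof -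
    let ?A = "{e\<in>E. col e = c \<and> e \<inter> S \<noteq> {}}"
    let ?A1 = "{e\<in>E. col e = c \<and> e \<subseteq> S}"
    have SU: "S = (\<Union>e\<in>?A. e \<inter> S)"
    proof
      show "S \<subseteq> (\<Union>e\<in>?A. e \<inter> S)"
      proof
        fix x assume "x \<in> S"
        then obtain e where "e\<in>E" "x\<in>e" "col e = c" using uniq[of x c] c SV by blast
        thus "x \<in> (\<Union>e\<in>?A. e \<inter> S)" using \<open>x\<in>S\<close> by blast
      qed
    qed auto
    have finA: "finite ?A" using finE by auto
    have "card (\<Union>e\<in>?A. e \<inter> S) = (\<Sum>e\<in>?A. card (e \<inter> S))"
    proof (rule card_UN_disjoint)
      show "\<forall>i\<in>?A. \<forall>j\<in>?A. i \<noteq> j \<longrightarrow> i \<inter> S \<inter> (j \<inter> S) = {}"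
      proof (intro ballI impI)
        fix i j assume ij: "i\<in>?A" "j\<in>?A" "i\<noteq>j"
        show "i \<inter> S \<inter> (j \<inter> S) = {}"
        proof (rule ccontr)
          assume "i \<inter> S \<inter> (j \<inter> S) \<noteq> {}"
          then obtain x where "x\<in>i" "x\<in>j" "x\<in>S" by blast
          thus False using uniq[of x c] c SV ij by blast
        qed
      qed
    qed (use finA finS in simp_all)
    hence cS: "card S = (\<Sum>e\<in>?A. card (e \<inter> S))" using SU by simp
    have Aeq: "?A = ?A1 \<union> Cc c"
    proof
      show "?A \<subseteq> ?A1 \<union> Cc c"
      proof
        fix e assume e: "e \<in> ?A"
        have "card e = 2" using gE e by blast
        then obtain a b where ab: "e = {a,b}" "a\<noteq>b" unfolding card_2_iff by blast
        have abV: "a\<in>V" "b\<in>V" using gE e ab by auto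
        show "e \<in> ?A1 \<union> Cc c"
        proof (cases "a\<in>S \<and> b\<in>S")
          case True thus ?thesis using e ab by auto
        next
          case False
          hence "(a\<in>S \<and> b\<notin>S) \<or> (b\<in>S \<and> a\<notin>S)" using e ab by auto
          hence "e \<in> C" using e ab abV unfolding C_def by (auto simp: insert_commute)
          thus ?thesis using e by (auto simp: Cc_def)
        qed
      qed
      show "?A1 \<union> Cc c \<subseteq> ?A"
      proof
        fix e assume e: "e \<in> ?A1 \<union> Cc c"
        show "e \<in> ?A"
        proof (cases "e \<in> ?A1")
          case True
          hence "card e = 2" "e \<in> E" using gE by auto
          hence "e \<noteq> {}" by auto
          thus ?thesis using True by auto
        next
          case False
          hence "e \<in> Cc c" using e by blast
          thus ?thesis unfolding Cc_def C_def by blast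
        qed
      qed
    qed
    have disj: "?A1 \<inter> Cc c = {}" by (auto simp: Cc_def C_def)
    have fin1: "finite ?A1" using finE by auto
    have fin2: "finite (Cc c)" using finC by (auto simp: Cc_def)
    have "(\<Sum>e\<in>?A. card (e \<inter> S)) = (\<Sum>e\<in>?A1. card (e \<inter> S)) + (\<Sum>e\<in>Cc c. card (e \<inter> S))"
      unfolding Aeq by (rule sum.union_disjoint[OF fin1 fin2 disj])
    moreover have "(\<Sum>e\<in>?A1. card (e \<inter> S)) = (\<Sum>e\<in>?A1. 2)"
      by (rule sum.cong) (use gE in \<open>auto simp: Int_absorb2\<close>)
    moreover have "(\<Sum>e\<in>Cc c. card (e \<inter> S)) = (\<Sum>e\<in>Cc c. 1)"
    proof (rule sum.cong)
      fix e assume "e \<in> Cc c"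
      then obtain x y where "x\<in>S" "y\<in>V-S" "e={x,y}" by (auto simp: Cc_def C_def)
      hence "e \<inter> S = {x}" by auto
      thus "card (e \<inter> S) = 1" by simp
    qed simp
    ultimately show ?thesis using cS by simp
  qed
  show ?thesis
  proof (cases "even (card S)")
    case True
    have "even (card (Cc c))" if "c\<in>{1..k}" for c using parity[OF that] True by presburger
    hence "\<forall>c\<in>{1..k}. even (card (Cc c))" by blast
    hence "even (\<Sum>c\<in>{1..k}. card (Cc c))" by (intro dvd_sum) auto
    thus ?thesis using partC cardC by simp
  next
    case False
    have "1 \<le> card (Cc c)" if "c\<in>{1..k}" for c using parity[OF that] False by presburger
    hence "\<forall>c\<in>{1..k}. 1 \<le> card (Cc c)" by blast
    hence "(\<Sum>c\<in>{1..k}. (1::nat)) \<le> (\<Sum>c\<in>{1..k}. card (Cc c))" by (intro sum_mono) auto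
    hence "k \<le> card C" using partC by simp
    thus ?thesis using cardC assms(2) by simp
  qed
qed

end
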